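(* Let $A=(A,m_A,\mu_A,\Delta_A,\varepsilon_A)$ be a commutative bialgebra and let $\text{Ш}_e(A)=(\text{Ш}_e(A),\diamond,P_e,j_A)$ be the free commutative extended Rota-Baxter algebra of weight $(\lambda,\kappa)$ on $A$. Let $\mu\in\mathbf{k}$ be a root of $t^2-\lambda t+\kappa$. Then there exists a unique homomorphism $\varepsilon_e:\text{Ш}_e(A)\to\mathbf{k}$ of extended Rota-Baxter algebras of weight $(\lambda,\kappa)$ (where $\mathbf{k}$ carries the operator $-\mu\,\mathrm{id}$) such that $$\varepsilon_e\circ j_A=\varepsilon_A\quad\text{and}\quad \varepsilon_e\circ P_e=-\mu\,\mathrm{id}\circ\varepsilon_e.$$
   Context: $\mathbf{k}$ is a commutative unitary ring. An extended Rota-Baxter operator of weight $(\lambda,\kappa)$ on an algebra $R$ is a linear $P:R\to R$ with $P(x)P(y)=P(xP(y))+P(P(x)y)+\lambda P(xy)+\kappa xy$. $\text{Ш}_e(A)=\bigoplus_{n\ge1}A^{\otimes n}$, $P_e(\mathfrak{a})=1_A\otimes\mathfrak{a}$, $j_A:A\to\text{Ш}_e(A)$ the inclusion $A=A^{\otimes1}$, and $\diamond$ the product defined recursively on pure tensors $\mathfrak{a}=a_0\otimes\mathfrak{a}'\in A^{\otimes(m+1)}$, $\mathfrak{b}=b_0\otimes\mathfrak{b}'\in A^{\otimes(n+1)}$ by $a_0b_0$ ($m=n=0$), $a_0b_0\otimes\mathfrak{b}'$ ($m=0,n\ge1$), $a_0b_0\otimes\mathfrak{a}'$ ($m\ge1,n=0$),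 and $a_0b_0\otimes(\mathfrak{a}'\diamond(1_A\otimes\mathfrak{b}')+(1_A\otimes\mathfrak{a}')\diamond\mathfrak{b}'+\lambda\mathfrak{a}'\diamond\mathfrak{b}')+\kappa a_0b_0(\mathfrak{a}'\diamond\mathfrak{b}')$ ($m,n\ge1$). It is the free commutative extended Rota-Baxter algebra of weight $(\lambda,\kappa)$ on $A$ (universal property with respect to algebra homomorphisms from $A$). $-\mu\,\mathrm{id}$ is an extended Rota-Baxter operator of weight $(\lambda,\kappa)$ on $\mathbf{k}$ since $\mu^2-\lambda\mu+\kappa=0$. *)

theory Defs
  imports Main "HOL-Library.Poly_Mapping" "HOL-Library.FuncSet"
begin

text \<open>
The commutative
k-algebra A is a type 'a of class comm_ring_1 together with a scalar action
sc :: 'k => 'a => 'a.  Tensor powers over k are built literally: the free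
k-module on words (lists) of elements of A, i.e. 'a list =>0 'k, modulo the
k-submodule N generated by the multilinearity relations in each slot.  A word of
length n stands for the pure tensor a1 (x) ... (x) an.  Sha_e(A) is the set of
cosets of elements not involving the empty word (i.e. the direct sum of
A^{(x)n}, n >= 1).
\<close>

type_synonym ('a,'k) fmod = "'a list \<Rightarrow>\<^sub>0 'k"

definition smul :: "'k::comm_ring_1 \<Rightarrow> ('a,'k) fmod \<Rightarrow> ('a,'k) fmod" where
  "smul c x = Poly_Mapping.map (\<lambda>v. c * v) x"

definition linext :: "('a list \<Rightarrow> ('b,'k::comm_ring_1) fmod) \<Rightarrow> ('a,'k) fmod \<Rightarrow> ('b,'k) fmod" where
  "linext f x = (\<Sum>w\<in>Poly_Mapping.keys x. smul (Poly_Mapping.lookup x w) (f w))"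

definition wd :: "'a list \<Rightarrow> ('a,'k::comm_ring_1) fmod" where
  "wd w = Poly_Mapping.single w 1"

inductive_set tens_rel :: "('k::comm_ring_1 \<Rightarrow> 'a::comm_ring_1 \<Rightarrow> 'a) \<Rightarrow> ('a,'k) fmod set"
  for sc where
  gen_add: "wd (u @ (a + b) # v) - wd (u @ a # v) - wd (u @ b # v) \<in> tens_rel sc"
| gen_sc: "wd (u @ sc c a # v) - smul c (wd (u @ a # v)) \<in> tens_rel sc"
| zero: "0 \<in> tens_rel sc"
| add: "x \<in> tens_rel sc \<Longrightarrow> y \<in> tens_rel sc \<Longrightarrow> x + y \<in> tens_rel sc"
| scal: "x \<in> tens_rel sc \<Longrightarrow> smul c x \<in> tens_rel sc"

definition comm_kalg :: "('k::comm_ring_1 \<Rightarrow> 'a::comm_ring_1 \<Rightarrow> 'a) \<Rightarrow> bool" where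
  "comm_kalg sc \<longleftrightarrow>
     (\<forall>c a b. sc c (a + b) = sc c a + sc c b) \<and>
     (\<forall>c d a. sc (c + d) a = sc c a + sc d a) \<and>
     (\<forall>c d a. sc (c * d) a = sc c (sc d a)) \<and>
     (\<forall>a. sc 1 a = a) \<and>
     (\<forall>c a b. sc c (a * b) = sc c a * b)"

text \<open>Structure maps of A (x) A and A (x) A (x) A, computed on representatives
 (A (x) A = words of length 2 modulo tens_rel).\<close>
definition tmul2 :: "('a::comm_ring_1,'k::comm_ring_1) fmod \<Rightarrow> ('a,'k) fmod \<Rightarrow> ('a,'k) fmod" where
  "tmul2 x y = linext (\<lambda>u. linext (\<lambda>v. wd (map2 (*) u v)) y) x"

definition comm_bialgebra ::
  "('k::comm_ring_1 \<Rightarrow> 'a::comm_ring_1 \<Rightarrow> 'a) \<Rightarrow> ('a \<Rightarrow> ('a,'k) fmod) \<Rightarrow> ('a \<Rightarrow> 'k) \<Rightarrow> bool" where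
  "comm_bialgebra sc \<Delta> eps \<longleftrightarrow>
     comm_kalg sc \<and>
     \<comment> \<open>coproduct lands in A (x) A and is a k-algebra map\<close>
     (\<forall>a. \<forall>w\<in>Poly_Mapping.keys (\<Delta> a). length w = 2) \<and>
     (\<forall>a b. \<Delta> (a + b) - (\<Delta> a + \<Delta> b) \<in> tens_rel sc) \<and>
     (\<forall>c a. \<Delta> (sc c a) - smul c (\<Delta> a) \<in> tens_rel sc) \<and>
     (\<forall>a b. \<Delta> (a * b) - tmul2 (\<Delta> a) (\<Delta> b) \<in> tens_rel sc) \<and>
     \<Delta> 1 - wd [1, 1] \<in> tens_rel sc \<and>
     \<comment> \<open>coassociativity\<close>
     (\<forall>a. linext (\<lambda>w. linext (\<lambda>u. wd (u @ [w ! 1])) (\<Delta> (w ! 0))) (\<Delta> a)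
          - linext (\<lambda>w. linext (\<lambda>u. wd (w ! 0 # u)) (\<Delta> (w ! 1))) (\<Delta> a) \<in> tens_rel sc) \<and>
     \<comment> \<open>counit laws\<close>
     (\<forall>a. (\<Sum>w\<in>Poly_Mapping.keys (\<Delta> a). sc (Poly_Mapping.lookup (\<Delta> a) w) (sc (eps (w ! 0)) (w ! 1))) = a) \<and>
     (\<forall>a. (\<Sum>w\<in>Poly_Mapping.keys (\<Delta> a). sc (Poly_Mapping.lookup (\<Delta> a) w) (sc (eps (w ! 1)) (w ! 0))) = a) \<and>
     \<comment> \<open>counit is a k-algebra map\<close>
     (\<forall>a b. eps (a + b) = eps a + eps b) \<and>
     (\<forall>c a. eps (sc c a) = c * eps a) \<and>
     (\<forall>a b. eps (a * b) = eps a * eps b) \<and>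
     eps 1 = 1"

text \<open>a (x) X and a * X (multiplication into the first tensor factor), linearly extended\<close>
definition prep :: "'a \<Rightarrow> ('a,'k::comm_ring_1) fmod \<Rightarrow> ('a,'k) fmod" where
  "prep a x = linext (\<lambda>w. wd (a # w)) x"

definition mulhd :: "'a::comm_ring_1 \<Rightarrow> ('a,'k::comm_ring_1) fmod \<Rightarrow> ('a,'k) fmod" where
  "mulhd a x = linext (\<lambda>w. case w of [] \<Rightarrow> 0 | y # ys \<Rightarrow> wd ((a * y) # ys)) x"

fun dia :: "'k::comm_ring_1 \<Rightarrow> 'k \<Rightarrow> 'a::comm_ring_1 list \<Rightarrow> 'a list \<Rightarrow> ('a,'k) fmod" where
  "dia l k [] v = 0"
| "dia l k u [] = 0"
| "dia l k [a] (b # bs) = wd ((a * b) # bs)"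
| "dia l k (a # a1 # as) [b] = wd ((a * b) # a1 # as)"
| "dia l k (a # a1 # as) (b # b1 # bs) =
     prep (a * b) (dia l k (a1 # as) (1 # b1 # bs) + dia l k (1 # a1 # as) (b1 # bs)
                   + smul l (dia l k (a1 # as) (b1 # bs)))
     + smul k (mulhd (a * b) (dia l k (a1 # as) (b1 # bs)))"

definition dmd :: "'k::comm_ring_1 \<Rightarrow> 'k \<Rightarrow> ('a::comm_ring_1,'k) fmod \<Rightarrow> ('a,'k) fmod \<Rightarrow> ('a,'k) fmod" where
  "dmd l k x y = linext (\<lambda>u. linext (\<lambda>v. dia l k u v) y) x"

definition cls :: "('k::comm_ring_1 \<Rightarrow> 'a::comm_ring_1 \<Rightarrow> 'a) \<Rightarrow> ('a,'k) fmod \<Rightarrow> ('a,'k) fmod set" where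
  "cls sc x = {y. y - x \<in> tens_rel sc}"

definition rep :: "('a,'k::comm_ring_1) fmod set \<Rightarrow> ('a,'k) fmod" where
  "rep X = (SOME x. x \<in> X)"

definition Sha :: "('k::comm_ring_1 \<Rightarrow> 'a::comm_ring_1 \<Rightarrow> 'a) \<Rightarrow> ('a,'k) fmod set set" where
  "Sha sc = cls sc ` {x. [] \<notin> Poly_Mapping.keys x}"

definition Sha_add where "Sha_add sc X Y = cls sc (rep X + rep Y)"
definition Sha_smul where "Sha_smul sc c X = cls sc (smul c (rep X))"
definition Sha_mul where "Sha_mul sc l k X Y = cls sc (dmd l k (rep X) (rep Y))"
definition Sha_P where "Sha_P sc X = cls sc (prep 1 (rep X))"
definition Sha_j where "Sha_j sc a = cls sc (wd [a])"

text \<open>Homomorphisms of extended Rota-Baxter algebras Sha_e(A) -> k,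
  where k carries the operator Q (for us Q = -mu id).\<close>
definition Sha_ERB_hom ::
  "('k::comm_ring_1 \<Rightarrow> 'a::comm_ring_1 \<Rightarrow> 'a) \<Rightarrow> 'k \<Rightarrow> 'k \<Rightarrow> ('k \<Rightarrow> 'k)
     \<Rightarrow> (('a,'k) fmod set \<Rightarrow> 'k) \<Rightarrow> bool" where
  "Sha_ERB_hom sc l k Q f \<longleftrightarrow>
     f \<in> extensional (Sha sc) \<and>
     (\<forall>X\<in>Sha sc. \<forall>Y\<in>Sha sc. f (Sha_add sc X Y) = f X + f Y) \<and>
     (\<forall>c. \<forall>X\<in>Sha sc. f (Sha_smul sc c X) = c * f X) \<and>
     (\<forall>X\<in>Sha sc. \<forall>Y\<in>Sha sc. f (Sha_mul sc l k X Y) = f X * f Y) \<and>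
     f (Sha_j sc 1) = 1 \<and>
     (\<forall>X\<in>Sha sc. f (Sha_P sc X) = Q (f X))"

end

theory Submission imports Defs begin

lemma lookup_smul[simp]: "Poly_Mapping.lookup (smul c x) w = c * Poly_Mapping.lookup x w"
  unfolding smul_def by (simp add: Poly_Mapping.map.rep_eq when_def)

lemma smul_add: "smul c (x + y) = smul c x + smul c y"
  by (rule poly_mapping_eqI) (simp add: lookup_add algebra_simps)
lemma smul_add2: "smul (c + d) x = smul c x + smul d x"
  by (rule poly_mapping_eqI) (simp add: lookup_add algebra_simps)
lemma smul_diff: "smul c (x - y) = smul c x - smul c y"
  by (rule poly_mapping_eqI) (simp add: lookup_minus algebra_simps)
lemma smul_smul: "smul c (smul d x) = smul (c * d) x"
  by (rule poly_mapping_eqI) (simp add: algebra_simps)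
lemma smul_1[simp]: "smul 1 x = x"
  by (rule poly_mapping_eqI) simp
lemma smul_0[simp]: "smul 0 x = 0"
  by (rule poly_mapping_eqI) simp
lemma smul_zero[simp]: "smul c 0 = 0"
  by (rule poly_mapping_eqI) simp
lemma smul_m1: "smul (-1) x = - x"
  by (rule poly_mapping_eqI) simp
lemma smul_sum: "smul c (sum f S) = (\<Sum>i\<in>S. smul c (f i))"
  by (induction S rule: infinite_finite_induct) (auto simp: smul_add)
lemma smul_wd: "smul c (wd w) = Poly_Mapping.single w c"
  unfolding wd_def by (rule poly_mapping_eqI) (simp add: lookup_single when_def)

lemma sum_keys_super:
  assumes "finite S" "Poly_Mapping.keys x \<subseteq> S" "\<And>w. h w 0 = 0"
  shows "(\<Sum>w\<in>Poly_Mapping.keys x. h w (Poly_Mapping.lookup x w)) = (\<Sum>w\<in>S. h w (Poly_Mapping.lookup x w))"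
  by (rule sum.mono_neutral_left) (use assms in \<open>auto simp: in_keys_iff\<close>)

lemma sum_keys_add:
  fixes h :: "'x \<Rightarrow> 'c::comm_ring_1 \<Rightarrow> 'd::comm_monoid_add"
  assumes "\<And>w. h w 0 = 0" "\<And>w a b. h w (a + b) = h w a + h w b"
  shows "(\<Sum>w\<in>Poly_Mapping.keys (x+y). h w (Poly_Mapping.lookup (x+y) w)) =
    (\<Sum>w\<in>Poly_Mapping.keys x. h w (Poly_Mapping.lookup x w)) + (\<Sum>w\<in>Poly_Mapping.keys y. h w (Poly_Mapping.lookup y w))"
proof -
  let ?S = "Poly_Mapping.keys x \<union> Poly_Mapping.keys y"
  have "(\<Sum>w\<in>Poly_Mapping.keys (x+y). h w (Poly_Mapping.lookup (x+y) w)) = (\<Sum>w\<in>?S. h w (Poly_Mapping.lookup (x+y) w))"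
    by (rule sum_keys_super) (use assms keys_add[of x y] in auto)
  also have "\<dots> = (\<Sum>w\<in>?S. h w (Poly_Mapping.lookup x w)) + (\<Sum>w\<in>?S. h w (Poly_Mapping.lookup y w))"
    by (simp add: lookup_add assms sum.distrib)
  also have "\<dots> = (\<Sum>w\<in>Poly_Mapping.keys x. h w (Poly_Mapping.lookup x w)) + (\<Sum>w\<in>Poly_Mapping.keys y. h w (Poly_Mapping.lookup y w))"
    by (subst (1 2) sum_keys_super[symmetric]) (use assms in auto)
  finally show ?thesis .
qed

lemma sum_keys_smul:
  assumes "\<And>w. h w 0 = 0"
  shows "(\<Sum>w\<in>Poly_Mapping.keys (smul c x). h w (Poly_Mapping.lookup (smul c x) w)) =
    (\<Sum>w\<in>Poly_Mapping.keys x. h w (c * Poly_Mapping.lookup x w))"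
proof -
  have "Poly_Mapping.keys (smul c x) \<subseteq> Poly_Mapping.keys x" by (auto simp: in_keys_iff)
  then show ?thesis by (subst sum_keys_super[where S="Poly_Mapping.keys x"]) (use assms in auto)
qed

lemma linext_add: "linext f (x + y) = linext f x + linext f y"
  unfolding linext_def by (rule sum_keys_add) (auto simp: smul_add2)
lemma linext_smul: "linext f (smul c x) = smul c (linext f x)"
  unfolding linext_def by (subst sum_keys_smul) (auto simp: smul_sum smul_smul)
lemma linext_zero[simp]: "linext f 0 = 0"
  unfolding linext_def by simp
lemma linext_neg: "linext f (- x) = - linext f x"
  by (metis linext_smul smul_m1)
lemma linext_diff: "linext f (x - y) = linext f x - linext f y"
  by (metis diff_conv_add_uminus linext_add linext_neg)
lemma linext_wd[simp]: "linext f (wd w) = f w"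
  unfolding linext_def wd_def by simp

lemma linext_fadd: "linext (\<lambda>w. f w + g w) x = linext f x + linext g x"
  unfolding linext_def by (simp add: smul_add sum.distrib)
lemma linext_fdiff: "linext (\<lambda>w. f w - g w) x = linext f x - linext g x"
  unfolding linext_def by (simp add: smul_diff sum_subtractf)
lemma linext_fsmul: "linext (\<lambda>w. smul c (f w)) x = smul c (linext f x)"
  unfolding linext_def by (simp add: smul_sum smul_smul mult.commute)

definition lf :: "('a list \<Rightarrow> 'k::comm_ring_1) \<Rightarrow> ('a,'k) fmod \<Rightarrow> 'k" where
  "lf g x = (\<Sum>w\<in>Poly_Mapping.keys x. Poly_Mapping.lookup x w * g w)"

lemma lf_add: "lf g (x + y) = lf g x + lf g y"
  unfolding lf_def by (rule sum_keys_add[where h="\<lambda>w a. a * g w"]) (auto simp: algebra_simps)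
lemma lf_smul: "lf g (smul c x) = c * lf g x"
  unfolding lf_def by (subst sum_keys_smul[where h="\<lambda>w a. a * g w"]) (auto simp: sum_distrib_left mult.assoc)
lemma lf_zero[simp]: "lf g 0 = 0"
  unfolding lf_def by simp
lemma lf_neg: "lf g (- x) = - lf g x"
  by (metis lf_smul smul_m1 mult_minus1)
lemma lf_diff: "lf g (x - y) = lf g x - lf g y"
  by (metis diff_conv_add_uminus lf_add lf_neg)
lemma lf_wd[simp]: "lf g (wd w) = g w"
  unfolding lf_def wd_def by simp
lemma lf_sum: "lf g (sum f S) = (\<Sum>i\<in>S. lf g (f i))"
  by (induction S rule: infinite_finite_induct) (auto simp: lf_add)
lemma lf_linext: "lf g (linext f x) = lf (\<lambda>w. lf g (f w)) x"
  unfolding linext_def lf_def[of "\<lambda>w. lf g (f w)"] by (simp add: lf_sum lf_smul)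

lemma lookup_sum_nil: "Poly_Mapping.lookup (linext f x) [] = lf (\<lambda>w. Poly_Mapping.lookup (f w) []) x"
  unfolding linext_def lf_def by (simp add: lookup_sum)


abbreviation N where "N sc \<equiv> tens_rel sc"

lemma N_neg: "x \<in> N sc \<Longrightarrow> - x \<in> N sc"
  by (metis smul_m1 tens_rel.scal)
lemma N_diff: "x \<in> N sc \<Longrightarrow> y \<in> N sc \<Longrightarrow> x - y \<in> N sc"
  by (metis N_neg diff_conv_add_uminus tens_rel.add)
lemma N_sum: "(\<And>i. i \<in> S \<Longrightarrow> f i \<in> N sc) \<Longrightarrow> sum f S \<in> N sc"
  by (induction S rule: infinite_finite_induct) (auto intro: tens_rel.intros)
lemma linext_in_N: "(\<And>w. f w \<in> N sc) \<Longrightarrow> linext f x \<in> N sc"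
  unfolding linext_def by (rule N_sum) (auto intro: tens_rel.intros)

definition resp where
  "resp sc F \<longleftrightarrow> (\<forall>u a b v. F (u @ (a + b) # v) - F (u @ a # v) - F (u @ b # v) \<in> N sc) \<and>
     (\<forall>u c a v. F (u @ sc c a # v) - smul c (F (u @ a # v)) \<in> N sc)"

lemma linext_pres: assumes "resp sc F" "r \<in> N sc" shows "linext F r \<in> N sc"
  using assms(2)
proof induction
  case (gen_add u a b v) then show ?case using assms(1) by (simp add: resp_def linext_diff)
next
  case (gen_sc u c a v) then show ?case using assms(1) by (simp add: resp_def linext_diff linext_smul)
qed (auto simp: linext_add linext_smul intro: tens_rel.intros)

lemma lookup_N: "r \<in> N sc \<Longrightarrow> Poly_Mapping.lookup r [] = 0"
  by (induction rule: tens_rel.induct) (auto simp: lookup_minus lookup_add wd_def lookup_single when_def)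

lemma lf_N: assumes "\<And>u a b v. g (u @ (a + b) # v) = g (u @ a # v) + g (u @ b # v)"
  "\<And>u c a v. g (u @ sc c a # v) = c * g (u @ a # v)"
  and "r \<in> N sc" shows "lf g r = 0"
  using assms(3) by induction (auto simp: lf_diff lf_add lf_smul assms(1,2))

lemma cls_eq: "cls sc x = cls sc y \<longleftrightarrow> x - y \<in> N sc"
proof
  assume "cls sc x = cls sc y"
  moreover have "x \<in> cls sc x" by (simp add: cls_def tens_rel.zero)
  ultimately show "x - y \<in> N sc" by (simp add: cls_def)
next
  assume h: "x - y \<in> N sc"
  show "cls sc x = cls sc y"
  proof (auto simp: cls_def)
    fix z assume "z - x \<in> N sc"
    from tens_rel.add[OF this h] show "z - y \<in> N sc" by simp
  next
    fix z assume "z - y \<in> N sc"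
    from N_diff[OF this h] show "z - x \<in> N sc" by simp
  qed
qed

lemma rep_cls: "rep (cls sc x) - x \<in> N sc"
proof -
  have "x \<in> cls sc x" by (simp add: cls_def tens_rel.zero)
  then have "rep (cls sc x) \<in> cls sc x" unfolding rep_def by (rule someI)
  then show ?thesis by (simp add: cls_def)
qed

lemma cls_rep: "cls sc (rep (cls sc x)) = cls sc x"
  using rep_cls cls_eq by blast

lemma gen_add': "x = a + b \<Longrightarrow> wd (u @ x # v) - wd (u @ a # v) - wd (u @ b # v) \<in> N sc"
  using tens_rel.gen_add by blast
lemma gen_sc': "x = sc c a \<Longrightarrow> wd (u @ x # v) - smul c (wd (u @ a # v)) \<in> N sc"
  using tens_rel.gen_sc by blast
lemma prep_add: "prep c (x + y) = prep c x + prep c y" unfolding prep_def by (rule linext_add)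
lemma prep_smul: "prep c (smul d x) = smul d (prep c x)" unfolding prep_def by (rule linext_smul)
lemma prep_diff: "prep c (x - y) = prep c x - prep c y" unfolding prep_def by (rule linext_diff)
lemma mulhd_add: "mulhd c (x + y) = mulhd c x + mulhd c y" unfolding mulhd_def by (rule linext_add)
lemma mulhd_smul: "mulhd c (smul d x) = smul d (mulhd c x)" unfolding mulhd_def by (rule linext_smul)
lemma mulhd_diff: "mulhd c (x - y) = mulhd c x - mulhd c y" unfolding mulhd_def by (rule linext_diff)
lemma prep_wd[simp]: "prep c (wd w) = wd (c # w)" unfolding prep_def by simp
lemma mulhd_wd[simp]: "mulhd c (wd (y # w)) = wd (c * y # w)" unfolding mulhd_def by simp

lemma prep_N: "r \<in> N sc \<Longrightarrow> prep c r \<in> N sc"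
  unfolding prep_def
proof (rule linext_pres[OF _])
  show "resp sc (\<lambda>w. wd (c # w))" unfolding resp_def
    by (auto intro!: gen_add'[where u="c # u" for u, simplified] gen_sc'[where u="c # u" for u, simplified])
qed


lemma kalg_mult: "comm_kalg sc \<Longrightarrow> d * sc c a = sc c (d * a)"
  unfolding comm_kalg_def by (metis mult.commute)
lemma kalg_mult2: "comm_kalg sc \<Longrightarrow> sc c a * d = sc c (a * d)"
  unfolding comm_kalg_def by (metis)

lemma mulhd_N: assumes "comm_kalg sc" "r \<in> N sc" shows "mulhd c r \<in> N sc"
  unfolding mulhd_def
proof (rule linext_pres[OF _ assms(2)])
  show "resp sc (\<lambda>w. case w of [] \<Rightarrow> 0 | y # ys \<Rightarrow> wd (c * y # ys))" unfolding resp_def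
  proof (intro conjI allI)
    fix u a b v show "(case u @ (a + b) # v of [] \<Rightarrow> 0 | y # ys \<Rightarrow> wd (c * y # ys)) -
       (case u @ a # v of [] \<Rightarrow> 0 | y # ys \<Rightarrow> wd (c * y # ys)) -
       (case u @ b # v of [] \<Rightarrow> 0 | y # ys \<Rightarrow> wd (c * y # ys)) \<in> N sc"
      using gen_add'[where x="c*(a+b)" and a="c*a" and b="c*b" and sc=sc and u="[]" and v=v] gen_add'[where x="a+b" and a=a and b=b and sc=sc and u="c * hd u # tl u" and v=v]
      by (cases u) (auto simp: algebra_simps)
  next
    fix u d a v show "(case u @ sc d a # v of [] \<Rightarrow> 0 | y # ys \<Rightarrow> wd (c * y # ys)) -
         smul d (case u @ a # v of [] \<Rightarrow> 0 | y # ys \<Rightarrow> wd (c * y # ys)) \<in> N sc"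
      using gen_sc'[where x="c*sc d a" and sc=sc and c=d and a="c*a" and u="[]" and v=v] gen_sc'[where x="sc d a" and sc=sc and c=d and a=a and u="c * hd u # tl u" and v=v]
        kalg_mult[OF assms(1)]
      by (cases u) auto
  qed
qed

lemma prep_hd_add: "prep (a + b) Z - prep a Z - prep b Z \<in> N sc"
  unfolding prep_def linext_fdiff[symmetric]
  by (rule linext_in_N) (rule gen_add'[where u="[]", simplified], simp)
lemma prep_hd_sc: "prep (sc c a) Z - smul c (prep a Z) \<in> N sc"
  unfolding prep_def linext_fsmul[symmetric] linext_fdiff[symmetric]
  by (rule linext_in_N) (rule gen_sc'[where u="[]", simplified], simp)
lemma mulhd_hd_add: "mulhd (a + b) Z - mulhd a Z - mulhd b Z \<in> N sc"
  unfolding mulhd_def linext_fdiff[symmetric]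
  apply (rule linext_in_N)
  subgoal for w by (cases w) (auto intro: tens_rel.zero gen_add'[where u="[]", simplified, unfolded diff_diff_eq] simp: algebra_simps)
  done
lemma mulhd_hd_sc: "comm_kalg sc \<Longrightarrow> mulhd (sc c a) Z - smul c (mulhd a Z) \<in> N sc"
  unfolding mulhd_def linext_fsmul[symmetric] linext_fdiff[symmetric]
  apply (rule linext_in_N)
  subgoal for w by (cases w) (auto intro: tens_rel.zero gen_sc'[where u="[]", simplified] simp: kalg_mult2)
  done


lemma dia_Nil2[simp]: "dia l k u [] = 0" by (cases u) auto
lemma dia_single[simp]: "dia l k [a] (b # B) = wd (a * b # B)" by simp
lemma dia_cons_single[simp]: "A \<noteq> [] \<Longrightarrow> dia l k (a # A) [b] = wd (a * b # A)" by (cases A) auto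
lemma dia_cons: "A \<noteq> [] \<Longrightarrow> B \<noteq> [] \<Longrightarrow> dia l k (a # A) (b # B) =
   prep (a * b) (dia l k A (1 # B) + dia l k (1 # A) B + smul l (dia l k A B))
     + smul k (mulhd (a * b) (dia l k A B))"
  by (cases A; cases B) auto

lemma comb_add: "prep c (Z1+Z2+smul l Z3) + smul k (mulhd c Z3)
   - (prep c (Z1'+Z2'+smul l Z3') + smul k (mulhd c Z3'))
   - (prep c (Z1''+Z2''+smul l Z3'') + smul k (mulhd c Z3''))
  = prep c ((Z1-Z1'-Z1'') + (Z2 - Z2' - Z2'') + smul l (Z3 - Z3' - Z3'')) + smul k (mulhd c (Z3 - Z3' - Z3''))"
  by (simp add: prep_add prep_diff prep_smul mulhd_add mulhd_diff smul_diff smul_add algebra_simps)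

lemma comb_sc: "prep e (Z1+Z2+smul l Z3) + smul k (mulhd e Z3)
   - smul c (prep e (Z1'+Z2'+smul l Z3') + smul k (mulhd e Z3'))
  = prep e ((Z1 - smul c Z1') + (Z2 - smul c Z2') + smul l (Z3 - smul c Z3')) + smul k (mulhd e (Z3 - smul c Z3'))"
  by (simp add: prep_add prep_diff prep_smul mulhd_diff mulhd_smul smul_diff smul_add smul_smul mult.commute algebra_simps)

lemma comb_hd_add: "prep e Z + smul k (mulhd e W) - (prep e1 Z + smul k (mulhd e1 W)) - (prep e2 Z + smul k (mulhd e2 W))
   = (prep e Z - prep e1 Z - prep e2 Z) + smul k (mulhd e W - mulhd e1 W - mulhd e2 W)"
  by (simp add: smul_diff smul_add algebra_simps)

lemma comb_hd_sc: "prep e Z + smul k (mulhd e W) - smul c (prep e1 Z + smul k (mulhd e1 W))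
   = (prep e Z - smul c (prep e1 Z)) + smul k (mulhd e W - smul c (mulhd e1 W))"
  by (simp add: smul_diff smul_add smul_smul mult.commute algebra_simps)

lemma gen_add_hd: "x = a + b \<Longrightarrow> wd (x # v) - (wd (a # v) + wd (b # v)) \<in> N sc"
  by (metis append_Nil diff_diff_eq gen_add')
lemma gen_add_2: "x = a + b \<Longrightarrow> wd (h # u @ x # v) - (wd (h # u @ a # v) + wd (h # u @ b # v)) \<in> N sc"
  by (metis append_Cons diff_diff_eq gen_add')
lemma gen_add_3: "x = a + b \<Longrightarrow> wd (h # u @ x # v) - wd (h # u @ a # v) - wd (h # u @ b # v) \<in> N sc"
  by (metis append_Cons gen_add')

lemma dia_add: assumes kalg: "comm_kalg sc" shows "u = p @ (x + y) # q \<Longrightarrow>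
   dia l k u v - dia l k (p @ x # q) v - dia l k (p @ y # q) v \<in> N sc"
proof (induction l k u v arbitrary: p rule: dia.induct)
  case (1 l k v) then show ?case by simp
next
  case (2 l k u) then show ?case by (simp add: tens_rel.zero)
next
  case (3 l k a b bs)
  then have "p = []" "q = []" "a = x + y" by (cases p; auto)+
  then show ?case by (auto intro!: gen_add_hd simp: algebra_simps)
next
  case (4 l k a a1 as b)
  show ?case
  proof (cases p)
    case Nil
    with 4 show ?thesis by (auto intro!: gen_add_hd simp: algebra_simps)
  next
    case (Cons h p')
    with 4 show ?thesis by (auto intro!: gen_add_3)
  qed
next
  case (5 l k a a1 as b b1 bs)
  show ?case
  proof (cases p)
    case Nil
    with "5.prems" have e: "a = x + y" "q = a1 # as" by auto
    show ?thesis using Nil e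
      apply (simp add: dia_cons del: dia.simps)
      apply (subst comb_hd_add)
      apply (rule tens_rel.add)
       apply (rule prep_hd_add[where a="x * b" and b="y*b", simplified distrib_right[symmetric]])
      apply (rule tens_rel.scal)
      apply (rule mulhd_hd_add[where a="x * b" and b="y*b", simplified distrib_right[symmetric]])
      done
  next
    case (Cons h p')
    with "5.prems" have e: "a = h" "a1 # as = p' @ (x + y) # q" by auto
    have i1: "dia l k (p' @ (x + y) # q) (1 # b1 # bs) - dia l k (p' @ x # q) (1 # b1 # bs) - dia l k (p' @ y # q) (1 # b1 # bs) \<in> N sc"
      using 5(1) e by (metis)
    have i2: "dia l k (1 # p' @ (x + y) # q) (b1 # bs) - dia l k (1 # p' @ x # q) (b1 # bs) - dia l k (1 # p' @ y # q) (b1 # bs) \<in> N sc"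
      using 5(2)[of "1 # p'"] e by (metis append_Cons)
    have i3: "dia l k (p' @ (x + y) # q) (b1 # bs) - dia l k (p' @ x # q) (b1 # bs) - dia l k (p' @ y # q) (b1 # bs) \<in> N sc"
      using 5(3) e by (metis)
    show ?thesis using Cons e
      apply (simp add: dia_cons del: dia.simps)
      apply (subst comb_add)
      apply (intro tens_rel.add tens_rel.scal prep_N i1 i2 i3 mulhd_N[OF kalg])
      done
  qed
qed

lemma gen_sc_hd: "x = sc c a \<Longrightarrow> wd (x # v) - smul c (wd (a # v)) \<in> N sc"
  by (metis append_Nil gen_sc')
lemma gen_sc_3: "x = sc c a \<Longrightarrow> wd (h # u @ x # v) - smul c (wd (h # u @ a # v)) \<in> N sc"
  by (metis append_Cons gen_sc')

lemma dia_sc: assumes kalg: "comm_kalg sc" shows "u = p @ sc c x # q \<Longrightarrow>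
   dia l k u v - smul c (dia l k (p @ x # q) v) \<in> N sc"
proof (induction l k u v arbitrary: p rule: dia.induct)
  case (1 l k v) then show ?case by simp
next
  case (2 l k u) then show ?case by (simp add: tens_rel.zero)
next
  case (3 l k a b bs)
  then have "p = []" "q = []" "a = sc c x" by (cases p; auto)+
  then show ?case by (auto intro!: gen_sc_hd simp: kalg_mult2[OF kalg])
next
  case (4 l k a a1 as b)
  show ?case
  proof (cases p)
    case Nil
    with 4 show ?thesis by (auto intro!: gen_sc_hd simp: kalg_mult2[OF kalg])
  next
    case (Cons h p')
    with 4 show ?thesis by (auto intro!: gen_sc_3)
  qed
next
  case (5 l k a a1 as b b1 bs)
  show ?case
  proof (cases p)
    case Nil
    with "5.prems" have e: "a = sc c x" "q = a1 # as" by auto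
    show ?thesis using Nil e
      apply (simp add: dia_cons kalg_mult2[OF kalg] del: dia.simps)
      apply (subst comb_hd_sc)
      apply (rule tens_rel.add)
       apply (rule prep_hd_sc)
      apply (rule tens_rel.scal)
      apply (rule mulhd_hd_sc[OF kalg])
      done
  next
    case (Cons h p')
    with "5.prems" have e: "a = h" "a1 # as = p' @ sc c x # q" by auto
    have i1: "dia l k (p' @ sc c x # q) (1 # b1 # bs) - smul c (dia l k (p' @ x # q) (1 # b1 # bs)) \<in> N sc"
      using 5(1) e by (metis)
    have i2: "dia l k (1 # p' @ sc c x # q) (b1 # bs) - smul c (dia l k (1 # p' @ x # q) (b1 # bs)) \<in> N sc"
      using 5(2)[of "1 # p'"] e by (metis append_Cons)
    have i3: "dia l k (p' @ sc c x # q) (b1 # bs) - smul c (dia l k (p' @ x # q) (b1 # bs)) \<in> N sc"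
      using 5(3) e by (metis)
    show ?thesis using Cons e
      apply (simp add: dia_cons del: dia.simps)
      apply (subst comb_sc)
      apply (intro tens_rel.add tens_rel.scal prep_N i1 i2 i3 mulhd_N[OF kalg])
      done
  qed
qed


lemma lf_cong_keys: "(\<And>w. w \<in> Poly_Mapping.keys z \<Longrightarrow> g w = h w) \<Longrightarrow> lf g z = lf h z"
  unfolding lf_def by simp
lemma lf_cmul: "lf (\<lambda>w. c * g w) z = c * lf g z"
  unfolding lf_def by (simp add: sum_distrib_left mult.left_commute)
lemma lf_mulc: "lf (\<lambda>w. g w * c) z = lf g z * c"
  unfolding lf_def by (simp add: sum_distrib_right mult.assoc)
lemma lf_0[simp]: "lf (\<lambda>w. 0) z = 0"
  unfolding lf_def by simp

lemma nil_keys: "Poly_Mapping.lookup z [] = 0 \<Longrightarrow> w \<in> Poly_Mapping.keys z \<Longrightarrow> w \<noteq> []"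
  by (auto simp: in_keys_iff)

lemma lookup_wd: "Poly_Mapping.lookup (wd w) v = (if w = v then 1 else 0)"
  unfolding wd_def by (simp add: lookup_single when_def)

lemma lookup_prep_nil[simp]: "Poly_Mapping.lookup (prep c z) [] = 0"
  unfolding prep_def lookup_sum_nil by (simp add: lookup_wd)
lemma lookup_mulhd_nil[simp]: "Poly_Mapping.lookup (mulhd c z) [] = 0"
proof -
  have h: "\<And>w. Poly_Mapping.lookup (case w of [] \<Rightarrow> 0 | y # ys \<Rightarrow> wd (c * y # ys)) [] = 0"
    by (auto split: list.split simp: lookup_wd)
  have "lf (\<lambda>w. Poly_Mapping.lookup (case w of [] \<Rightarrow> 0 | y # ys \<Rightarrow> wd (c * y # ys)) []) z = lf (\<lambda>w. 0) z"
    by (rule lf_cong_keys) (simp only: h)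
  then show ?thesis unfolding mulhd_def lookup_sum_nil by simp
qed
lemma lookup_dia_nil[simp]: "Poly_Mapping.lookup (dia l k u v) [] = 0"
  by (induction l k u v rule: dia.induct) (auto simp: lookup_add lookup_wd)
lemma lookup_dmd_nil[simp]: "Poly_Mapping.lookup (dmd l k x y) [] = 0"
  unfolding dmd_def lookup_sum_nil by simp

lemma expand: "x = (\<Sum>w\<in>Poly_Mapping.keys x. smul (Poly_Mapping.lookup x w) (wd w))"
proof (rule poly_mapping_eqI)
  fix v
  have "Poly_Mapping.lookup (\<Sum>w\<in>Poly_Mapping.keys x. smul (Poly_Mapping.lookup x w) (wd w)) v
     = (\<Sum>w\<in>Poly_Mapping.keys x. Poly_Mapping.lookup x w * (if w = v then 1 else 0))"
    by (simp add: lookup_sum lookup_wd)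
  also have "\<dots> = (\<Sum>w\<in>Poly_Mapping.keys x. if w = v then Poly_Mapping.lookup x w else 0)"
    by (rule sum.cong) auto
  also have "\<dots> = Poly_Mapping.lookup x v"
    by (simp add: sum.delta' in_keys_iff)
  finally show "Poly_Mapping.lookup x v = Poly_Mapping.lookup (\<Sum>w\<in>Poly_Mapping.keys x. smul (Poly_Mapping.lookup x w) (wd w)) v" by simp
qed

lemma dia_single_fun: "(\<lambda>v. dia l k [a] v) = (\<lambda>w. case w of [] \<Rightarrow> 0 | y # ys \<Rightarrow> wd (a * y # ys))"
  by (rule ext) (auto split: list.split)

lemma dmd_add1: "dmd l k (x + x') y = dmd l k x y + dmd l k x' y"
  unfolding dmd_def by (rule linext_add)
lemma dmd_wd1: "dmd l k (wd [a]) y = mulhd a y"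
  unfolding dmd_def mulhd_def by (simp add: dia_single_fun)

lemma dmd_N1: assumes "comm_kalg sc" "r \<in> N sc" shows "dmd l k r y \<in> N sc"
  unfolding dmd_def
proof (rule linext_pres[OF _ assms(2)])
  show "resp sc (\<lambda>u. linext (dia l k u) y)" unfolding resp_def
  proof (intro conjI allI)
    fix u a b v
    show "linext (dia l k (u @ (a + b) # v)) y - linext (dia l k (u @ a # v)) y - linext (dia l k (u @ b # v)) y \<in> N sc"
      unfolding linext_fdiff[symmetric]
      by (rule linext_in_N) (rule dia_add[OF assms(1) refl])
  next
    fix u c a v
    show "linext (dia l k (u @ sc c a # v)) y - smul c (linext (dia l k (u @ a # v)) y) \<in> N sc"
      unfolding linext_fsmul[symmetric] linext_fdiff[symmetric]
      by (rule linext_in_N) (rule dia_sc[OF assms(1) refl])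
  qed
qed


definition psi :: "('a \<Rightarrow> 'k::comm_ring_1) \<Rightarrow> 'k \<Rightarrow> 'a list \<Rightarrow> 'k" where
  "psi e m w = prod_list (map e w) * (- m) ^ length w"
definition phi :: "('a \<Rightarrow> 'k::comm_ring_1) \<Rightarrow> 'k \<Rightarrow> 'a list \<Rightarrow> 'k" where
  "phi e m w = (case w of [] \<Rightarrow> 0 | a # w' \<Rightarrow> e a * psi e m w')"

lemma phi_cons[simp]: "phi e m (a # w) = e a * psi e m w" by (simp add: phi_def)
lemma phi_nil[simp]: "phi e m [] = 0" by (simp add: phi_def)
lemma psi_nil[simp]: "psi e m [] = 1" by (simp add: psi_def)

lemma phi_split: "phi e m (u @ x # v) = e x * (prod_list (map e u) * prod_list (map e v) * (- m) ^ (length u + length v))"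
  by (cases u) (auto simp: psi_def algebra_simps power_add)

lemma psi_ne: "w \<noteq> [] \<Longrightarrow> psi e m w = - m * phi e m w"
  by (cases w) (auto simp: psi_def algebra_simps)

lemma lf_phi_N:
  assumes "\<And>a b. e (a + b) = e a + e b" "\<And>c a. e (sc c a) = c * e a" "r \<in> N sc"
  shows "lf (phi e m) r = 0"
  by (rule lf_N[OF _ _ assms(3)]) (simp_all add: phi_split assms algebra_simps)

lemma lf_phi_prep: "lf (phi e m) (prep c z) = e c * lf (psi e m) z"
  unfolding prep_def lf_linext by (simp add: lf_cmul)

lemma lf_psi: "Poly_Mapping.lookup z [] = 0 \<Longrightarrow> lf (psi e m) z = - m * lf (phi e m) z"
proof -
  assume h: "Poly_Mapping.lookup z [] = 0"
  have "lf (psi e m) z = lf (\<lambda>w. - m * phi e m w) z"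
    by (rule lf_cong_keys) (use h nil_keys psi_ne in blast)
  then show ?thesis using lf_cmul[of "- m" "phi e m" z] by simp
qed

lemma lf_phi_mulhd: assumes "\<And>a b. e (a * b) = e a * e b"
  shows "lf (phi e m) (mulhd c z) = e c * lf (phi e m) z"
proof -
  have "lf (phi e m) (mulhd c z) = lf (\<lambda>w. e c * phi e m w) z"
    unfolding mulhd_def lf_linext
    by (rule lf_cong_keys) (auto split: list.split simp: assms)
  then show ?thesis by (simp add: lf_cmul)
qed

lemma dia_mult:
  assumes mult: "\<And>a b. e (a * b) = e a * e b" and one: "e 1 = 1"
  shows "m^2 - l * m + k = 0 \<Longrightarrow> u \<noteq> [] \<Longrightarrow> v \<noteq> [] \<Longrightarrow> lf (phi e m) (dia l k u v) = phi e m u * phi e m v"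
proof (induction l k u v rule: dia.induct)
  case (3 l k a b bs) then show ?case by (simp add: mult)
next
  case (4 l k a a1 as b) then show ?case by (simp add: mult)
next
  case (5 l k a a1 as b b1 bs)
  let ?A = "a1 # as" and ?B = "b1 # bs"
  let ?Z = "dia l k ?A (1 # ?B) + dia l k (1 # ?A) ?B + smul l (dia l k ?A ?B)"
  have hZ: "Poly_Mapping.lookup ?Z [] = 0" by (simp add: lookup_add)
  have PZ: "lf (phi e m) ?Z = phi e m ?A * phi e m (1 # ?B) + phi e m (1 # ?A) * phi e m ?B + l * (phi e m ?A * phi e m ?B)"
    using 5 by (simp add: lf_add lf_smul)
  have p1: "phi e m (1 # ?B) = - m * phi e m ?B" "phi e m (1 # ?A) = - m * phi e m ?A"
    using psi_ne[of ?B e m] psi_ne[of ?A e m] by (simp_all add: one)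
  have pa: "phi e m (a # ?A) = e a * (- m * phi e m ?A)" "phi e m (b # ?B) = e b * (- m * phi e m ?B)"
    using psi_ne[of ?B e m] psi_ne[of ?A e m] by simp_all
  have kk: "k = l * m - m^2" using "5.prems"(1) by (simp add: algebra_simps eq_neg_iff_add_eq_0 add_eq_0_iff)
  have "lf (phi e m) (dia l k (a # ?A) (b # ?B)) = lf (phi e m) (prep (a * b) ?Z) + k * lf (phi e m) (mulhd (a * b) (dia l k ?A ?B))"
    by (simp only: dia.simps lf_add lf_smul)
  also have "\<dots> = e (a * b) * (- m * lf (phi e m) ?Z) + k * (e (a * b) * (phi e m ?A * phi e m ?B))"
    unfolding lf_phi_prep lf_psi[OF hZ] lf_phi_mulhd[OF mult] using 5(3)[OF "5.prems"(1)] by simp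
  also have "\<dots> = phi e m (a # ?A) * phi e m (b # ?B)"
    unfolding PZ p1 pa mult by (simp add: kk algebra_simps power2_eq_square)
  finally show ?case .
qed auto

lemma dmd_mult:
  assumes mult: "\<And>a b. e (a * b) = e a * e b" and one: "e 1 = 1" and mu: "m^2 - l * m + k = 0"
    and hx: "Poly_Mapping.lookup x [] = 0" and hy: "Poly_Mapping.lookup y [] = 0"
  shows "lf (phi e m) (dmd l k x y) = lf (phi e m) x * lf (phi e m) y"
proof -
  have "lf (phi e m) (dmd l k x y) = lf (\<lambda>u. lf (\<lambda>v. lf (phi e m) (dia l k u v)) y) x"
    unfolding dmd_def lf_linext ..
  also have "\<dots> = lf (\<lambda>u. phi e m u * lf (phi e m) y) x"
  proof (rule lf_cong_keys)
    fix u assume u: "u \<in> Poly_Mapping.keys x"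
    have "lf (\<lambda>v. lf (phi e m) (dia l k u v)) y = lf (\<lambda>v. phi e m u * phi e m v) y"
      by (rule lf_cong_keys) (rule dia_mult[OF mult one mu, OF nil_keys[OF hx u] nil_keys[OF hy]])
    then show "lf (\<lambda>v. lf (phi e m) (dia l k u v)) y = phi e m u * lf (phi e m) y"
      by (simp add: lf_cmul)
  qed
  also have "\<dots> = lf (phi e m) x * lf (phi e m) y" by (rule lf_mulc)
  finally show ?thesis .
qed


lemma Sha_iff: "Z \<in> Sha sc \<longleftrightarrow> (\<exists>x. Poly_Mapping.lookup x [] = 0 \<and> Z = cls sc x)"
  unfolding Sha_def by (auto simp: in_keys_iff)

lemma rep_Sha: assumes "Z \<in> Sha sc"
  shows "Poly_Mapping.lookup (rep Z) [] = 0" "Z = cls sc (rep Z)"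
proof -
  obtain x where x: "Poly_Mapping.lookup x [] = 0" "Z = cls sc x" using assms Sha_iff by blast
  have "Poly_Mapping.lookup (rep Z - x) [] = 0" using lookup_N rep_cls x(2) by blast
  then show "Poly_Mapping.lookup (rep Z) [] = 0" using x(1) by (simp add: lookup_minus)
  show "Z = cls sc (rep Z)" using x(2) cls_rep by metis
qed

lemma cls_in_Sha: "Poly_Mapping.lookup x [] = 0 \<Longrightarrow> cls sc x \<in> Sha sc"
  using Sha_iff by blast

lemma Sha_add_cls: "Sha_add sc (cls sc a) (cls sc b) = cls sc (a + b)"
  unfolding Sha_add_def cls_eq
  using tens_rel.add[OF rep_cls[of sc a] rep_cls[of sc b]] by (simp add: algebra_simps)

lemma Sha_smul_cls: "Sha_smul sc c (cls sc a) = cls sc (smul c a)"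
  unfolding Sha_smul_def cls_eq
  using tens_rel.scal[OF rep_cls[of sc a], of c] by (simp add: smul_diff)

theorem lemma4p2:
  fixes sc :: "'k::comm_ring_1 \<Rightarrow> 'a::comm_ring_1 \<Rightarrow> 'a"
    and \<Delta> :: "'a \<Rightarrow> ('a,'k) fmod"
    and epsA :: "'a \<Rightarrow> 'k"
    and l k \<mu> :: 'k
  assumes "comm_bialgebra sc \<Delta> epsA"
    and "\<mu>^2 - l * \<mu> + k = 0"
  shows "\<exists>!f. Sha_ERB_hom sc l k (\<lambda>t. - \<mu> * t) f
              \<and> (\<forall>a. f (Sha_j sc a) = epsA a)
              \<and> (\<forall>X\<in>Sha sc. f (Sha_P sc X) = - \<mu> * f X)"
proof -
  have kalg: "comm_kalg sc" using assms(1) by (simp add: comm_bialgebra_def)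
  have eadd: "\<And>a b. epsA (a + b) = epsA a + epsA b"
    and esc: "\<And>c a. epsA (sc c a) = c * epsA a"
    and emult: "\<And>a b. epsA (a * b) = epsA a * epsA b"
    and eone: "epsA 1 = 1"
    using assms(1) by (simp_all add: comm_bialgebra_def)
  note mu = assms(2)
  define F where "F = lf (phi epsA \<mu>)"
  have FN: "r \<in> N sc \<Longrightarrow> F r = 0" for r unfolding F_def by (rule lf_phi_N[OF eadd esc])
  define f0 where "f0 = (\<lambda>Z. if Z \<in> Sha sc then F (rep Z) else undefined)"
  have f0_cls: "f0 (cls sc z) = F z" if "Poly_Mapping.lookup z [] = 0" for z
  proof -
    have "F (rep (cls sc z) - z) = 0" by (rule FN[OF rep_cls])
    then show ?thesis using cls_in_Sha[OF that] unfolding f0_def F_def by (simp add: lf_diff)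
  qed
  have f0_Sha: "f0 X = F (rep X)" if "X \<in> Sha sc" for X using that unfolding f0_def by simp
  have lk_wd: "Poly_Mapping.lookup (wd (a # w)) [] = 0" for a w by (simp add: lookup_wd)
  let ?P = "\<lambda>f. Sha_ERB_hom sc l k (\<lambda>t. - \<mu> * t) f
              \<and> (\<forall>a. f (Sha_j sc a) = epsA a)
              \<and> (\<forall>X\<in>Sha sc. f (Sha_P sc X) = - \<mu> * f X)"
  have Pprop: "f0 (Sha_P sc X) = - \<mu> * f0 X" if "X \<in> Sha sc" for X
  proof -
    have "f0 (Sha_P sc X) = F (prep 1 (rep X))" unfolding Sha_P_def by (rule f0_cls) simp
    also have "\<dots> = - \<mu> * F (rep X)" unfolding F_def lf_phi_prep eone
      using lf_psi[OF rep_Sha(1)[OF that]] by simp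
    finally show ?thesis using f0_Sha[OF that] by simp
  qed
  have jprop: "f0 (Sha_j sc a) = epsA a" for a
    unfolding Sha_j_def by (subst f0_cls) (simp_all add: lookup_wd F_def)
  have P0: "?P f0"
    unfolding Sha_ERB_hom_def
  proof (intro conjI ballI allI)
    show "f0 \<in> extensional (Sha sc)" unfolding f0_def extensional_def by simp
  next
    fix X Y assume X: "X \<in> Sha sc" and Y: "Y \<in> Sha sc"
    show "f0 (Sha_add sc X Y) = f0 X + f0 Y"
      unfolding Sha_add_def f0_Sha[OF X] f0_Sha[OF Y]
      by (subst f0_cls) (simp_all add: lookup_add rep_Sha(1)[OF X] rep_Sha(1)[OF Y] F_def lf_add)
    show "f0 (Sha_mul sc l k X Y) = f0 X * f0 Y"
      unfolding Sha_mul_def f0_Sha[OF X] f0_Sha[OF Y]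
      by (subst f0_cls) (simp_all add: F_def dmd_mult[OF emult eone mu rep_Sha(1)[OF X] rep_Sha(1)[OF Y]])
  next
    fix c X assume X: "X \<in> Sha sc"
    show "f0 (Sha_smul sc c X) = c * f0 X"
      unfolding Sha_smul_def f0_Sha[OF X]
      by (subst f0_cls) (simp_all add: rep_Sha(1)[OF X] F_def lf_smul)
  next
    show "f0 (Sha_j sc 1) = 1" using jprop eone by simp
  qed (use Pprop jprop in auto)
  have uniq: "g = f0" if Pg: "?P g" for g
  proof -
    have ext: "g \<in> extensional (Sha sc)"
      and gadd: "\<And>X Y. X \<in> Sha sc \<Longrightarrow> Y \<in> Sha sc \<Longrightarrow> g (Sha_add sc X Y) = g X + g Y"
      and gsmul: "\<And>c X. X \<in> Sha sc \<Longrightarrow> g (Sha_smul sc c X) = c * g X"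
      and gmul: "\<And>X Y. X \<in> Sha sc \<Longrightarrow> Y \<in> Sha sc \<Longrightarrow> g (Sha_mul sc l k X Y) = g X * g Y"
      and gj: "\<And>a. g (Sha_j sc a) = epsA a"
      and gP: "\<And>X. X \<in> Sha sc \<Longrightarrow> g (Sha_P sc X) = - \<mu> * g X"
      using Pg unfolding Sha_ERB_hom_def by auto
    have U1: "g (cls sc (wd (a # w))) = phi epsA \<mu> (a # w)" for a w
    proof (induction w arbitrary: a)
      case Nil
      then show ?case using gj[of a] by (simp add: Sha_j_def)
    next
      case (Cons b w)
      let ?w = "b # w"
      have e1: "Sha_P sc (cls sc (wd ?w)) = cls sc (wd (1 # ?w))"
        unfolding Sha_P_def cls_eq prep_diff[symmetric, of 1 _ "wd ?w", simplified]
        by (rule prep_N[OF rep_cls])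
      have e2: "Sha_mul sc l k (cls sc (wd [a])) (cls sc (wd (1 # ?w))) = cls sc (wd (a # ?w))"
      proof -
        define rA where "rA = rep (cls sc (wd [a])) - wd [a]"
        define rB where "rB = rep (cls sc (wd (1 # ?w))) - wd (1 # ?w)"
        have rA: "rA \<in> N sc" "rep (cls sc (wd [a])) = wd [a] + rA" using rep_cls unfolding rA_def by auto
        have rB: "rB \<in> N sc" "rep (cls sc (wd (1 # ?w))) = wd (1 # ?w) + rB" using rep_cls unfolding rB_def by auto
        have "dmd l k (rep (cls sc (wd [a]))) (rep (cls sc (wd (1 # ?w)))) - wd (a # ?w)
            = dmd l k rA (rep (cls sc (wd (1 # ?w)))) + mulhd a rB"
          unfolding rA(2) dmd_add1 dmd_wd1 unfolding rB(2) mulhd_add by simp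
        also have "\<dots> \<in> N sc"
          by (intro tens_rel.add dmd_N1[OF kalg rA(1)] mulhd_N[OF kalg rB(1)])
        finally show ?thesis unfolding Sha_mul_def cls_eq .
      qed
      have "g (cls sc (wd (a # ?w))) = g (cls sc (wd [a])) * g (Sha_P sc (cls sc (wd ?w)))"
        unfolding e1 e2[symmetric] by (rule gmul) (simp_all add: cls_in_Sha lk_wd)
      also have "\<dots> = epsA a * (- \<mu> * phi epsA \<mu> ?w)"
        using gj[of a] gP[OF cls_in_Sha[OF lk_wd]] Cons.IH by (simp add: Sha_j_def)
      also have "\<dots> = phi epsA \<mu> (a # ?w)"
        using psi_ne[of ?w epsA \<mu>] by simp
      finally show ?case .
    qed
    have U0: "g (cls sc 0) = 0"
    proof -
      have "cls sc 0 = Sha_smul sc 0 (cls sc 0)" by (simp add: Sha_smul_cls)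
      then show ?thesis using gsmul[of "cls sc 0" 0] cls_in_Sha[of 0 sc] by simp
    qed
    have U2: "finite K \<Longrightarrow> [] \<notin> K \<Longrightarrow>
       g (cls sc (\<Sum>w\<in>K. smul (c w) (wd w))) = (\<Sum>w\<in>K. c w * phi epsA \<mu> w)
       \<and> Poly_Mapping.lookup (\<Sum>w\<in>K. smul (c w) (wd w)) [] = 0" for K c
    proof (induction K rule: finite_induct)
      case empty then show ?case using U0 by simp
    next
      case (insert w K)
      then obtain a w' where w: "w = a # w'" by (cases w) auto
      have l1: "Poly_Mapping.lookup (smul (c w) (wd w)) [] = 0" using w by (simp add: lookup_wd)
      have "g (cls sc (\<Sum>w\<in>insert w K. smul (c w) (wd w)))
          = g (Sha_add sc (Sha_smul sc (c w) (cls sc (wd w))) (cls sc (\<Sum>w\<in>K. smul (c w) (wd w))))"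
        using insert by (simp add: Sha_smul_cls Sha_add_cls)
      also have "\<dots> = g (Sha_smul sc (c w) (cls sc (wd w))) + g (cls sc (\<Sum>w\<in>K. smul (c w) (wd w)))"
        apply (rule gadd)
        unfolding Sha_smul_cls using insert l1 by (simp_all add: cls_in_Sha)
      also have "\<dots> = c w * g (cls sc (wd w)) + g (cls sc (\<Sum>w\<in>K. smul (c w) (wd w)))"
        using gsmul[of "cls sc (wd w)" "c w"] w by (simp add: cls_in_Sha lk_wd)
      finally show ?case using insert w U1 l1 by (simp add: lookup_add)
    qed
    have "g X = f0 X" for X
    proof (cases "X \<in> Sha sc")
      case False then show ?thesis using ext unfolding f0_def extensional_def by simp
    next
      case True
      then obtain x where x: "Poly_Mapping.lookup x [] = 0" "X = cls sc x" using Sha_iff by blast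
      have nk: "[] \<notin> Poly_Mapping.keys x" using x(1) by (simp add: in_keys_iff)
      have "g X = (\<Sum>w\<in>Poly_Mapping.keys x. Poly_Mapping.lookup x w * phi epsA \<mu> w)"
        using U2[OF finite_keys nk, of "Poly_Mapping.lookup x"] x(2) expand[of x] by simp
      also have "\<dots> = f0 X" using f0_cls[OF x(1)] x(2) unfolding F_def lf_def by simp
      finally show ?thesis .
    qed
    then show ?thesis by blast
  qed
  show ?thesis using P0 uniq by blast
qed

end
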